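(* Let $k$ be a unital commutative ring, $n$ a positive integer, and let $\varepsilon\in k$ be invertible. Then there exist isomorphisms of graded $k$-modules \[\operatorname{Tor}_{\star}^{\mathcal{PR}_n(\varepsilon)}(\mathbf{1},\mathbf{1})\cong\begin{cases}k&\star=0\\0&\star>0\end{cases}\quad\text{and}\quad\operatorname{Ext}^{\star}_{\mathcal{PR}_n(\varepsilon)}(\mathbf{1},\mathbf{1})\cong\begin{cases}k&\star=0\\0&\star>0.\end{cases}\]
   Context: A rook $n$-diagram is a graph on vertices $1,\dots,n$ (left column, top to bottom) and $\bar1,\dots,\bar n$ (right column), drawn in the rectangle they span, each of whose connected components is either an isolated vertex or a single edge joining a left vertex to a right vertex (a propagating edge); it is planar if no two edges cross. The rook algebra $\mathcal{R}_n(\varepsilon)$ is the free $k$-module on rook $n$-diagrams with product: identify the right column of $d_1$ with the left column of $d_2$ (middle column); let $\beta$ be the number of isolated vertices in the middle column; let $d_3$ join two outer vertices iff they are joined by a path; $d_1d_2=\varepsilon^\beta d_3$. The planar rook algebra $\mathcal{PR}_n(\varepsilon)$ is its subalgebra spanned by planar rook $n$-diagrams. The augmentation $\tau$ sends diagrams with $n$ propagating edges to $1$ and all others to $0$; $\mathbf{1}$ is $k$ with the algebra acting via $\tau$. *)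

theory Defs
  imports Main
begin

text \<open>A rook n-diagram is encoded by its set of propagating edges (i, j),
meaning left vertex i is joined to right vertex j (vertices numbered 1..n,
top to bottom).  Every other vertex is isolated.\<close>

type_synonym diagram = "(nat \<times> nat) set"

definition rook_diagram :: "nat \<Rightarrow> diagram \<Rightarrow> bool" where
  "rook_diagram n d \<longleftrightarrow> d \<subseteq> {1..n} \<times> {1..n}
     \<and> (\<forall>i j j'. (i, j) \<in> d \<longrightarrow> (i, j') \<in> d \<longrightarrow> j = j')
     \<and> (\<forall>i i' j. (i, j) \<in> d \<longrightarrow> (i', j) \<in> d \<longrightarrow> i = i')"

definition planar_diagram :: "diagram \<Rightarrow> bool" where
  "planar_diagram d \<longleftrightarrow> (\<forall>i j i' j'. (i, j) \<in> d \<longrightarrow> (i', j') \<in> d \<longrightarrow> i < i' \<longrightarrow> j < j')"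

definition PR_diagrams :: "nat \<Rightarrow> diagram set" where
  "PR_diagrams n = {d. rook_diagram n d \<and> planar_diagram d}"

text \<open>Product of diagrams: d1 d2 = eps^beta d3, with d3 = composite relation
and beta = number of isolated vertices in the middle column.\<close>
definition mid_isolated :: "nat \<Rightarrow> diagram \<Rightarrow> diagram \<Rightarrow> nat" where
  "mid_isolated n d1 d2 = card ({1..n} - (Range d1 \<union> Domain d2))"

definition diag_comp :: "diagram \<Rightarrow> diagram \<Rightarrow> diagram" where
  "diag_comp d1 d2 = d1 O d2"

definition augmentation :: "nat \<Rightarrow> diagram \<Rightarrow> 'k::comm_ring_1" where
  "augmentation n d = (if card d = n then 1 else 0)"

text \<open>PR_n(eps) is free over k with basis the planar rook n-diagrams, so
Tor^A(1,1) is the homology of the (unnormalised) bar complex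
1 \<otimes>_A B(A) \<otimes>_A 1, whose degree-m term is A^{\<otimes> m}, free with basis
the words of length m in planar diagrams; Ext_A(1,1) is the cohomology of the
k-dual complex.  Chains/cochains are k-valued functions on words supported on
the basis words.\<close>

definition bar_words :: "nat \<Rightarrow> nat \<Rightarrow> diagram list set" where
  "bar_words n m = {ws. length ws = m \<and> set ws \<subseteq> PR_diagrams n}"

text \<open>Coefficient of the basis word w in the boundary of the basis word ws:
d[d_1|...|d_m] = tau(d_1)[d_2|...|d_m]
   + sum_{i=1}^{m-1} (-1)^i [d_1|...|d_i d_{i+1}|...|d_m]
   + (-1)^m tau(d_m)[d_1|...|d_{m-1}].\<close>
definition bar_bdry_basis :: "nat \<Rightarrow> 'k::comm_ring_1 \<Rightarrow> diagram list \<Rightarrow> diagram list \<Rightarrow> 'k" where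
  "bar_bdry_basis n eps ws w =
     (if ws = [] then 0 else
        augmentation n (hd ws) * (if w = tl ws then 1 else 0)
      + (\<Sum>i\<in>{1..<length ws}.
           (-1) ^ i * eps ^ mid_isolated n (ws ! (i - 1)) (ws ! i)
           * (if w = take (i - 1) ws @ [diag_comp (ws ! (i - 1)) (ws ! i)] @ drop (i + 1) ws
              then 1 else 0))
      + (-1) ^ length ws * augmentation n (last ws) * (if w = butlast ws then 1 else 0))"

definition bar_chains :: "nat \<Rightarrow> nat \<Rightarrow> (diagram list \<Rightarrow> 'k::comm_ring_1) set" where
  "bar_chains n m = {c. \<forall>w. w \<notin> bar_words n m \<longrightarrow> c w = 0}"

definition bar_bdry :: "nat \<Rightarrow> 'k::comm_ring_1 \<Rightarrow> nat \<Rightarrow> (diagram list \<Rightarrow> 'k) \<Rightarrow> (diagram list \<Rightarrow> 'k)" where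
  "bar_bdry n eps m c = (\<lambda>w. \<Sum>u\<in>bar_words n m. c u * bar_bdry_basis n eps u w)"

definition Tor_cycles :: "nat \<Rightarrow> 'k::comm_ring_1 \<Rightarrow> nat \<Rightarrow> (diagram list \<Rightarrow> 'k) set" where
  "Tor_cycles n eps m = {c \<in> bar_chains n m. bar_bdry n eps m c = (\<lambda>_. 0)}"

definition Tor_boundaries :: "nat \<Rightarrow> 'k::comm_ring_1 \<Rightarrow> nat \<Rightarrow> (diagram list \<Rightarrow> 'k) set" where
  "Tor_boundaries n eps m = bar_bdry n eps (Suc m) ` bar_chains n (Suc m)"

definition bar_cobdry :: "nat \<Rightarrow> 'k::comm_ring_1 \<Rightarrow> nat \<Rightarrow> (diagram list \<Rightarrow> 'k) \<Rightarrow> (diagram list \<Rightarrow> 'k)" where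
  "bar_cobdry n eps m f = (\<lambda>u. if u \<in> bar_words n (Suc m)
        then (\<Sum>w\<in>bar_words n m. bar_bdry_basis n eps u w * f w) else 0)"

definition Ext_cocycles :: "nat \<Rightarrow> 'k::comm_ring_1 \<Rightarrow> nat \<Rightarrow> (diagram list \<Rightarrow> 'k) set" where
  "Ext_cocycles n eps m = {f \<in> bar_chains n m. bar_cobdry n eps m f = (\<lambda>_. 0)}"

definition Ext_coboundaries :: "nat \<Rightarrow> 'k::comm_ring_1 \<Rightarrow> nat \<Rightarrow> (diagram list \<Rightarrow> 'k) set" where
  "Ext_coboundaries n eps m =
     (case m of 0 \<Rightarrow> {\<lambda>_. 0} | Suc p \<Rightarrow> bar_cobdry n eps p ` bar_chains n p)"

text \<open>Z/B is isomorphic to k as a k-module: there is a k-linear surjection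
Z \<rightarrow> k with kernel exactly B (first isomorphism theorem).\<close>
definition quotient_iso_ring :: "('a \<Rightarrow> 'k::comm_ring_1) set \<Rightarrow> ('a \<Rightarrow> 'k) set \<Rightarrow> bool" where
  "quotient_iso_ring Z B \<longleftrightarrow> (\<exists>f :: ('a \<Rightarrow> 'k) \<Rightarrow> 'k.
      (\<forall>c\<in>Z. \<forall>c'\<in>Z. \<forall>a b. f (\<lambda>x. a * c x + b * c' x) = a * f c + b * f c')
      \<and> f ` Z = UNIV \<and> {c \<in> Z. f c = 0} = B)"

definition quotient_zero :: "('a \<Rightarrow> 'k) set \<Rightarrow> ('a \<Rightarrow> 'k) set \<Rightarrow> bool" where
  "quotient_zero Z B \<longleftrightarrow> Z \<subseteq> B"

end

theory Submission imports Defs begin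

definition pid :: "nat set \<Rightarrow> diagram" where "pid S = (\<lambda>i. (i,i)) ` S"
definition coefS :: "'k::comm_ring_1 \<Rightarrow> nat \<Rightarrow> nat set \<Rightarrow> 'k" where
  "coefS iv n S = (- iv) ^ (n - card S)"
definition Ecoef :: "'k::comm_ring_1 \<Rightarrow> nat \<Rightarrow> diagram \<Rightarrow> 'k" where
  "Ecoef iv n x = (\<Sum>S\<in>Pow {1..n}. coefS iv n S * (if x = pid S then 1 else 0))"
definition hs :: "'k::comm_ring_1 \<Rightarrow> nat \<Rightarrow> (diagram list \<Rightarrow> 'k) \<Rightarrow> diagram list \<Rightarrow> 'k" where
  "hs iv n c w = (if w = [] then 0 else c (butlast w) * Ecoef iv n (last w))"

lemma finite_PR: "finite (PR_diagrams n)"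
proof -
  have "PR_diagrams n \<subseteq> Pow ({1..n} \<times> {1..n})"
    by (auto simp: PR_diagrams_def rook_diagram_def)
  then show ?thesis by (rule finite_subset) simp
qed

lemma finite_words: "finite (bar_words n m)"
proof -
  have "bar_words n m = {xs. set xs \<subseteq> PR_diagrams n \<and> length xs = m}"
    by (auto simp: bar_words_def)
  then show ?thesis using finite_lists_length_eq[OF finite_PR] by simp
qed

lemma pid_PR: "S \<subseteq> {1..n} \<Longrightarrow> pid S \<in> PR_diagrams n"
  by (auto simp: pid_def PR_diagrams_def rook_diagram_def planar_diagram_def)

lemma pid_inj: "pid S = pid T \<Longrightarrow> S = T"
  unfolding pid_def by auto

lemma words_Suc: "bar_words n (Suc m) = (\<lambda>(v,x). v @ [x]) ` (bar_words n m \<times> PR_diagrams n)"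
proof (rule set_eqI, rule iffI)
  fix u assume u: "u \<in> bar_words n (Suc m)"
  then have "u \<noteq> []" by (auto simp: bar_words_def)
  then have "u = butlast u @ [last u]" by simp
  moreover have "butlast u \<in> bar_words n m" "last u \<in> PR_diagrams n" using u \<open>u \<noteq> []\<close>
    by (auto simp: bar_words_def dest: in_set_butlastD)
  ultimately show "u \<in> (\<lambda>(v,x). v @ [x]) ` (bar_words n m \<times> PR_diagrams n)" by force
qed (auto simp: bar_words_def)

lemma sum_words_Suc:
  "(\<Sum>u\<in>bar_words n (Suc m). h u) = (\<Sum>v\<in>bar_words n m. \<Sum>x\<in>PR_diagrams n. h (v @ [x]))"
proof -
  have inj: "inj_on (\<lambda>(v,x). v @ [x]) (bar_words n m \<times> PR_diagrams n)"
    by (auto simp: inj_on_def)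
  have "(\<Sum>u\<in>bar_words n (Suc m). h u) = (\<Sum>p\<in>bar_words n m \<times> PR_diagrams n. h ((\<lambda>(v,x). v @ [x]) p))"
    unfolding words_Suc by (rule sum.reindex[OF inj, unfolded comp_def])
  also have "\<dots> = (\<Sum>v\<in>bar_words n m. \<Sum>x\<in>PR_diagrams n. h (v @ [x]))"
    by (simp only: sum.cartesian_product) (rule sum.cong, auto)
  finally show ?thesis .
qed

lemma sum_E: "(\<Sum>x\<in>PR_diagrams n. Ecoef iv n x * G x) = (\<Sum>S\<in>Pow {1..n}. coefS iv n S * G (pid S))"
proof -
  have "(\<Sum>x\<in>PR_diagrams n. Ecoef iv n x * G x)
      = (\<Sum>x\<in>PR_diagrams n. \<Sum>S\<in>Pow {1..n}. coefS iv n S * (if x = pid S then G x else 0))"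
    unfolding Ecoef_def sum_distrib_right by (intro sum.cong refl) simp
  also have "\<dots> = (\<Sum>S\<in>Pow {1..n}. \<Sum>x\<in>PR_diagrams n. coefS iv n S * (if x = pid S then G x else 0))"
    by (rule sum.swap)
  also have "\<dots> = (\<Sum>S\<in>Pow {1..n}. coefS iv n S * G (pid S))"
    by (rule sum.cong, simp) (simp add: sum_distrib_left[symmetric] finite_PR pid_PR)
  finally show ?thesis .
qed

lemma L1: "(\<Sum>S\<in>Pow {1..n}. coefS iv n S * (if w = t @ [pid S] then 1 else 0))
   = (if w \<noteq> [] \<and> butlast w = t then Ecoef iv n (last w) else 0)"
proof (cases "w \<noteq> [] \<and> butlast w = t")
  case True
  then have "\<And>y. (w = t @ [y]) = (last w = y)" by (metis append_butlast_last_id butlast_snoc last_snoc)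
  then show ?thesis using True by (simp add: Ecoef_def)
next
  case False
  then have "\<And>y. w \<noteq> t @ [y]" by auto
  then show ?thesis using False by auto
qed

lemma sum_Pow_insert:
  assumes "finite A" "x \<notin> A"
  shows "(\<Sum>X\<in>Pow (insert x A). g X) = (\<Sum>X\<in>Pow A. g X + g (insert x X))"
proof -
  have "(\<Sum>X\<in>Pow (insert x A). g X) = (\<Sum>X\<in>Pow A. g X) + (\<Sum>X\<in>insert x ` Pow A. g X)"
    unfolding Pow_insert by (rule sum.union_disjoint) (use assms in auto)
  also have "(\<Sum>X\<in>insert x ` Pow A. g X) = (\<Sum>X\<in>Pow A. g (insert x X))"
    by (subst sum.reindex) (use assms in \<open>auto intro!: inj_onI simp: o_def\<close>)
  finally show ?thesis by (simp add: sum.distrib)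
qed

lemma rook_inj_snd: "rook_diagram n a \<Longrightarrow> inj_on snd a"
  unfolding rook_diagram_def inj_on_def by auto

lemma rook_inj_fst: "rook_diagram n a \<Longrightarrow> inj_on fst a"
  unfolding rook_diagram_def inj_on_def by auto

lemma rook_finite: "rook_diagram n a \<Longrightarrow> finite a"
  unfolding rook_diagram_def by (meson finite_SigmaI finite_atLeastAtMost finite_subset)

lemma card_Range: "rook_diagram n a \<Longrightarrow> card (Range a) = card a"
  by (metis Range_snd card_image rook_inj_snd)

lemma card_Domain: "rook_diagram n a \<Longrightarrow> card (Domain a) = card a"
  by (metis Domain_fst card_image rook_inj_fst)

lemma id_diag:
  assumes a: "a \<in> PR_diagrams n" and c: "card a = n"
  shows "a = pid {1..n}"
proof -
  have rk: "rook_diagram n a" and pl: "planar_diagram a" using a by (auto simp: PR_diagrams_def)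
  have fin: "finite a" using rk by (rule rook_finite)
  have sub: "a \<subseteq> {1..n} \<times> {1..n}" using rk by (simp add: rook_diagram_def)
  have fun1: "\<And>i j j'. (i, j) \<in> a \<Longrightarrow> (i, j') \<in> a \<Longrightarrow> j = j'"
   and fun2: "\<And>i i' j. (i, j) \<in> a \<Longrightarrow> (i', j) \<in> a \<Longrightarrow> i = i'"
    using rk by (auto simp: rook_diagram_def)
  have plan: "\<And>i j i' j'. (i, j) \<in> a \<Longrightarrow> (i', j') \<in> a \<Longrightarrow> i < i' \<Longrightarrow> j < j'"
    using pl by (auto simp: planar_diagram_def)
  have Dom: "Domain a = {1..n}"
    by (rule card_subset_eq) (use sub card_Domain[OF rk] c in auto)
  have Ran: "Range a = {1..n}"
    by (rule card_subset_eq) (use sub card_Range[OF rk] c in auto)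
  have le1: "i \<le> j" if ij: "(i, j) \<in> a" for i j
  proof -
    define D where "D = {p \<in> a. fst p \<le> i}"
    have "fst ` D = {1..i}"
    proof
      show "fst ` D \<subseteq> {1..i}" using sub by (auto simp: D_def)
      show "{1..i} \<subseteq> fst ` D"
      proof
        fix i' assume "i' \<in> {1..i}"
        moreover have "i \<le> n" using ij sub by auto
        ultimately have "i' \<in> Domain a" using Dom by auto
        then obtain j' where "(i', j') \<in> a" by auto
        then show "i' \<in> fst ` D" using \<open>i' \<in> {1..i}\<close> by (force simp: D_def)
      qed
    qed
    moreover have "inj_on fst D" using rook_inj_fst[OF rk] by (auto simp: D_def inj_on_def)
    ultimately have cD: "card D = i" using card_image[of fst D] by simp
    have "snd ` D \<subseteq> {1..j}"
    proof
      fix y assume "y \<in> snd ` D"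
      then obtain i' where p: "(i', y) \<in> a" "i' \<le> i" by (auto simp: D_def)
      have "y \<le> j"
      proof (cases "i' < i")
        case True then show ?thesis using plan[OF p(1) ij] by simp
      next
        case False then have "i' = i" using p(2) by simp
        then show ?thesis using fun1[OF ij, of y] p(1) by simp
      qed
      moreover have "1 \<le> y" using p sub by auto
      ultimately show "y \<in> {1..j}" by auto
    qed
    moreover have "inj_on snd D" using rook_inj_snd[OF rk] by (auto simp: D_def inj_on_def)
    ultimately have "card D \<le> card {1..j}" using card_inj_on_le[of _ D "{1..j}"] by blast
    then show ?thesis using cD by simp
  qed
  have le2: "j \<le> i" if ij: "(i, j) \<in> a" for i j
  proof -
    define D where "D = {p \<in> a. snd p \<le> j}"
    have "snd ` D = {1..j}"
    proof
      show "snd ` D \<subseteq> {1..j}" using sub by (auto simp: D_def)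
      show "{1..j} \<subseteq> snd ` D"
      proof
        fix j' assume "j' \<in> {1..j}"
        moreover have "j \<le> n" using ij sub by auto
        ultimately have "j' \<in> Range a" using Ran by auto
        then obtain i' where "(i', j') \<in> a" by auto
        then show "j' \<in> snd ` D" using \<open>j' \<in> {1..j}\<close> by (force simp: D_def)
      qed
    qed
    moreover have "inj_on snd D" using rook_inj_snd[OF rk] by (auto simp: D_def inj_on_def)
    ultimately have cD: "card D = j" using card_image[of snd D] by simp
    have "fst ` D \<subseteq> {1..i}"
    proof
      fix y assume "y \<in> fst ` D"
      then obtain j' where p: "(y, j') \<in> a" "j' \<le> j" by (auto simp: D_def)
      have "\<not> i < y" using plan[OF ij p(1)] p(2) by auto
      then have "y \<le> i" by simp
      moreover have "1 \<le> y" using p sub by auto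
      ultimately show "y \<in> {1..i}" by auto
    qed
    moreover have "inj_on fst D" using rook_inj_fst[OF rk] by (auto simp: D_def inj_on_def)
    ultimately have "card D \<le> card {1..i}" using card_inj_on_le[of _ D "{1..i}"] by blast
    then show ?thesis using cD by simp
  qed
  have "a \<subseteq> pid {1..n}"
  proof
    fix p assume "p \<in> a"
    then obtain i j where p: "p = (i, j)" "(i, j) \<in> a" by (cases p) auto
    then have "i = j" using le1 le2 by (meson antisym)
    then show "p \<in> pid {1..n}" using p sub by (auto simp: pid_def)
  qed
  moreover have "pid {1..n} \<subseteq> a"
  proof
    fix p assume "p \<in> pid {1..n}"
    then obtain i where i: "p = (i, i)" "i \<in> {1..n}" by (auto simp: pid_def)
    then have "i \<in> Domain a" using Dom by simp
    then obtain j where "(i, j) \<in> a" by auto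
    then show "p \<in> a" using le1 le2 i by (metis antisym)
  qed
  ultimately show ?thesis by blast
qed

lemma Domain_pid[simp]: "Domain (pid S) = S" and Range_pid[simp]: "Range (pid S) = S"
  by (auto simp: pid_def)

lemma card_pid[simp]: "card (pid S) = card S"
  unfolding pid_def by (rule card_image) (auto simp: inj_on_def)

lemma comp_pid_full: "S \<subseteq> {1..n} \<Longrightarrow> diag_comp (pid {1..n}) (pid S) = pid S"
  unfolding diag_comp_def pid_def by blast

lemma comp_pid_insert: "j \<notin> Range a \<Longrightarrow> diag_comp a (pid (insert j S)) = diag_comp a (pid S)"
  unfolding diag_comp_def pid_def by blast

lemma R:
  fixes eps iv :: "'k::comm_ring_1"
  assumes ei: "eps * iv = 1" and a: "a \<in> PR_diagrams n"
  shows "(\<Sum>S\<in>Pow {1..n}. coefS iv n S * eps ^ mid_isolated n a (pid S) * F (diag_comp a (pid S)))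
       = augmentation n a * (\<Sum>S\<in>Pow {1..n}. coefS iv n S * F (pid S))"
proof (cases "card a = n")
  case True
  then have a_id: "a = pid {1..n}" by (rule id_diag[OF a])
  have "\<And>S. S \<in> Pow {1..n} \<Longrightarrow> diag_comp a (pid S) = pid S \<and> mid_isolated n a (pid S) = 0"
    using comp_pid_full[of _ n] by (auto simp: a_id mid_isolated_def)
  then show ?thesis using True by (simp add: augmentation_def)
next
  case False
  have rk: "rook_diagram n a" using a by (simp add: PR_diagrams_def)
  have "Range a \<subseteq> {1..n}" using rk by (auto simp: rook_diagram_def)
  moreover have "Range a \<noteq> {1..n}" using card_Range[OF rk] False by auto
  ultimately obtain j0 where j0: "j0 \<in> {1..n}" "j0 \<notin> Range a" by blast
  define A' where "A' = {1..n} - {j0}"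
  have PA: "{1..n} = insert j0 A'" "finite A'" "j0 \<notin> A'" using j0 by (auto simp: A'_def)
  define T where "T S = coefS iv n S * eps ^ mid_isolated n a (pid S) * F (diag_comp a (pid S))" for S
  have "(\<Sum>S\<in>Pow {1..n}. coefS iv n S * eps ^ mid_isolated n a (pid S) * F (diag_comp a (pid S)))
      = (\<Sum>S\<in>Pow A'. T S + T (insert j0 S))"
    unfolding T_def[symmetric] PA(1) by (rule sum_Pow_insert[OF PA(2,3)])
  also have "\<dots> = 0"
  proof (rule sum.neutral, rule ballI)
    fix S assume S: "S \<in> Pow A'"
    have finS: "finite S" using S PA(2) by (auto intro: finite_subset)
    have j0S: "j0 \<notin> S" using S PA(3) by auto
    have cS: "card (insert j0 S) = Suc (card S)" using finS j0S by simp
    have "card (insert j0 S) \<le> card {1..n}"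
      by (rule card_mono) (use S j0 PA in auto)
    then have k: "n - card S = Suc (n - card (insert j0 S))" using cS by simp
    have setq: "{1..n} - (Range a \<union> S) = insert j0 ({1..n} - (Range a \<union> insert j0 S))"
      using j0 j0S by auto
    have q: "mid_isolated n a (pid S) = Suc (mid_isolated n a (pid (insert j0 S)))"
      unfolding mid_isolated_def Domain_pid setq by (rule card_insert_disjoint) auto
    have "T S = (- iv) ^ Suc (n - card (insert j0 S)) * eps ^ Suc (mid_isolated n a (pid (insert j0 S)))
                 * F (diag_comp a (pid (insert j0 S)))"
      unfolding T_def coefS_def k q comp_pid_insert[OF j0(2)] ..
    also have "\<dots> = - ((eps * iv) * ((- iv) ^ (n - card (insert j0 S)) * eps ^ (mid_isolated n a (pid (insert j0 S)))
                 * F (diag_comp a (pid (insert j0 S)))))"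
      by (simp add: algebra_simps)
    also have "\<dots> = - T (insert j0 S)" by (simp add: ei T_def coefS_def)
    finally show "T S + T (insert j0 S) = 0" by simp
  qed
  finally show ?thesis using False by (simp add: augmentation_def)
qed

lemma coef_tau: "(\<Sum>S\<in>Pow {1..n}. coefS iv n S * augmentation n (pid S)) = (1::'k::comm_ring_1)"
proof -
  have "(card S = n) = (S = {1..n})" if "S \<in> Pow {1..n}" for S
  proof -
    have "S \<subseteq> {1..n}" using that by simp
    then show ?thesis using card_subset_eq[OF finite_atLeastAtMost, of S 1 n] by auto
  qed
  then have "(\<Sum>S\<in>Pow {1..n}. coefS iv n S * augmentation n (pid S))
      = (\<Sum>S\<in>Pow {1..n}. if S = {1..n} then (1::'k) else 0)"
    by (intro sum.cong refl) (auto simp: augmentation_def coefS_def)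
  then show ?thesis by simp
qed

lemma bdb_snoc:
  fixes eps :: "'k::comm_ring_1"
  assumes v: "v \<noteq> []"
  shows "bar_bdry_basis n eps (v @ [x]) w =
    augmentation n (hd v) * (if w = tl v @ [x] then 1 else 0)
  + (\<Sum>i\<in>{1..<length v}. (-1) ^ i * eps ^ mid_isolated n (v ! (i - 1)) (v ! i)
       * (if w = (take (i - 1) v @ [diag_comp (v ! (i - 1)) (v ! i)] @ drop (i + 1) v) @ [x] then 1 else 0))
  + (-1) ^ length v * eps ^ mid_isolated n (last v) x * (if w = butlast v @ [diag_comp (last v) x] then 1 else 0)
  + (-1) ^ Suc (length v) * augmentation n x * (if w = v then 1 else 0)"
proof -
  define m where "m = length v"
  have m1: "1 \<le> m" using v by (simp add: m_def Suc_le_eq)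
  have s1: "(\<Sum>i\<in>{1..<length (v @ [x])}. (-1) ^ i * eps ^ mid_isolated n ((v @ [x]) ! (i - 1)) ((v @ [x]) ! i)
           * (if w = take (i - 1) (v @ [x]) @ [diag_comp ((v @ [x]) ! (i - 1)) ((v @ [x]) ! i)] @ drop (i + 1) (v @ [x])
              then 1 else 0))
      = (\<Sum>i\<in>{1..<m}. (-1) ^ i * eps ^ mid_isolated n ((v @ [x]) ! (i - 1)) ((v @ [x]) ! i)
           * (if w = take (i - 1) (v @ [x]) @ [diag_comp ((v @ [x]) ! (i - 1)) ((v @ [x]) ! i)] @ drop (i + 1) (v @ [x])
              then 1 else 0))
        + (-1) ^ m * eps ^ mid_isolated n ((v @ [x]) ! (m - 1)) ((v @ [x]) ! m)
           * (if w = take (m - 1) (v @ [x]) @ [diag_comp ((v @ [x]) ! (m - 1)) ((v @ [x]) ! m)] @ drop (m + 1) (v @ [x])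
              then 1 else 0)"
    using v by (simp add: m_def sum.atLeastLessThan_Suc m1[unfolded m_def])
  also have "(\<Sum>i\<in>{1..<m}. (-1) ^ i * eps ^ mid_isolated n ((v @ [x]) ! (i - 1)) ((v @ [x]) ! i)
           * (if w = take (i - 1) (v @ [x]) @ [diag_comp ((v @ [x]) ! (i - 1)) ((v @ [x]) ! i)] @ drop (i + 1) (v @ [x])
              then 1 else 0))
    = (\<Sum>i\<in>{1..<length v}. (-1) ^ i * eps ^ mid_isolated n (v ! (i - 1)) (v ! i)
       * (if w = (take (i - 1) v @ [diag_comp (v ! (i - 1)) (v ! i)] @ drop (i + 1) v) @ [x] then 1 else 0))"
    unfolding m_def by (intro sum.cong refl) (auto simp: nth_append)
  also have "(v @ [x]) ! (m - 1) = last v" using v by (simp add: m_def nth_append last_conv_nth)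
  also have "(v @ [x]) ! m = x" by (simp add: m_def)
  also have "take (m - 1) (v @ [x]) = butlast v" by (simp add: m_def butlast_conv_take)
  also have "drop (m + 1) (v @ [x]) = []" by (simp add: m_def)
  finally have s2: "(\<Sum>i\<in>{1..<length (v @ [x])}. (-1) ^ i * eps ^ mid_isolated n ((v @ [x]) ! (i - 1)) ((v @ [x]) ! i)
           * (if w = take (i - 1) (v @ [x]) @ [diag_comp ((v @ [x]) ! (i - 1)) ((v @ [x]) ! i)] @ drop (i + 1) (v @ [x])
              then 1 else 0))
     = (\<Sum>i\<in>{1..<length v}. (-1) ^ i * eps ^ mid_isolated n (v ! (i - 1)) (v ! i)
       * (if w = (take (i - 1) v @ [diag_comp (v ! (i - 1)) (v ! i)] @ drop (i + 1) v) @ [x] then 1 else 0))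
      + (-1) ^ length v * eps ^ mid_isolated n (last v) x * (if w = butlast v @ [diag_comp (last v) x] then 1 else 0)"
    by (simp add: m_def)
  show ?thesis
    unfolding bar_bdry_basis_def s2 using v by (simp add: algebra_simps)
qed

definition ind :: "'k::comm_ring_1 \<Rightarrow> nat \<Rightarrow> diagram list \<Rightarrow> diagram list \<Rightarrow> 'k" where
  "ind iv n t w = (\<Sum>S\<in>Pow {1..n}. coefS iv n S * (if w = t @ [pid S] then 1 else 0))"

lemma ind_eq: "ind iv n t w = (if w \<noteq> [] \<and> butlast w = t then Ecoef iv n (last w) else 0)"
  unfolding ind_def by (rule L1)

lemma hs_bdb:
  fixes eps :: "'k::comm_ring_1"
  assumes v: "v \<noteq> []"
  shows "hs iv n (bar_bdry_basis n eps v) w =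
    augmentation n (hd v) * ind iv n (tl v) w
  + (\<Sum>i\<in>{1..<length v}. (-1) ^ i * eps ^ mid_isolated n (v ! (i - 1)) (v ! i)
       * ind iv n (take (i - 1) v @ [diag_comp (v ! (i - 1)) (v ! i)] @ drop (i + 1) v) w)
  + (-1) ^ length v * augmentation n (last v) * ind iv n (butlast v) w"
proof (cases "w = []")
  case True
  then show ?thesis by (simp add: hs_def ind_eq)
next
  case False
  have e: "\<And>t. ind iv n t w = (if butlast w = t then 1 else 0) * Ecoef iv n (last w)"
    using False by (simp add: ind_eq)
  show ?thesis
    unfolding hs_def e bar_bdry_basis_def using False v
    by (simp add: distrib_right sum_distrib_right mult.assoc)
qed

lemma key:
  fixes eps :: "'k::comm_ring_1"
  assumes ei: "eps * iv = 1" and v: "v \<noteq> []" and lv: "last v \<in> PR_diagrams n"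
  shows "(\<Sum>S\<in>Pow {1..n}. coefS iv n S * bar_bdry_basis n eps (v @ [pid S]) w)
       = hs iv n (bar_bdry_basis n eps v) w + (-1) ^ Suc (length v) * (if w = v then 1 else 0)"
proof -
  define P1 where "P1 S = augmentation n (hd v) * (coefS iv n S * (if w = tl v @ [pid S] then 1 else 0))" for S
  define P2 where "P2 S = (\<Sum>i\<in>{1..<length v}. (-1) ^ i * eps ^ mid_isolated n (v ! (i - 1)) (v ! i)
       * (coefS iv n S * (if w = (take (i - 1) v @ [diag_comp (v ! (i - 1)) (v ! i)] @ drop (i + 1) v) @ [pid S] then 1 else 0)))" for S
  define P3 where "P3 S = (-1) ^ length v * (coefS iv n S * eps ^ mid_isolated n (last v) (pid S) * (if w = butlast v @ [diag_comp (last v) (pid S)] then 1 else 0))" for S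
  define P4 where "P4 S = (-1) ^ Suc (length v) * (if w = v then 1 else 0) * (coefS iv n S * augmentation n (pid S))" for S
  have "(\<Sum>S\<in>Pow {1..n}. coefS iv n S * bar_bdry_basis n eps (v @ [pid S]) w)
      = (\<Sum>S\<in>Pow {1..n}. P1 S + P2 S + P3 S + P4 S)"
    by (intro sum.cong refl) (simp add: bdb_snoc[OF v] P1_def P2_def P3_def P4_def algebra_simps sum_distrib_left)
  also have "\<dots> = sum P1 (Pow {1..n}) + sum P2 (Pow {1..n}) + sum P3 (Pow {1..n}) + sum P4 (Pow {1..n})"
    by (simp add: sum.distrib)
  also have "sum P1 (Pow {1..n}) = augmentation n (hd v) * ind iv n (tl v) w"
    by (simp add: P1_def ind_def sum_distrib_left)
  also have "sum P2 (Pow {1..n}) = (\<Sum>i\<in>{1..<length v}. (-1) ^ i * eps ^ mid_isolated n (v ! (i - 1)) (v ! i)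
       * ind iv n (take (i - 1) v @ [diag_comp (v ! (i - 1)) (v ! i)] @ drop (i + 1) v) w)"
    unfolding P2_def ind_def sum_distrib_left by (rule sum.swap)
  also have "sum P3 (Pow {1..n}) = (-1) ^ length v * augmentation n (last v) * ind iv n (butlast v) w"
    using R[OF ei lv, of "\<lambda>y. if w = butlast v @ [y] then 1 else 0"]
    by (simp add: P3_def ind_def sum_distrib_left[symmetric] mult.assoc)
  also have "sum P4 (Pow {1..n}) = (-1) ^ Suc (length v) * (if w = v then 1 else 0)"
    unfolding P4_def sum_distrib_left[symmetric] coef_tau by simp
  finally show ?thesis by (simp add: hs_bdb[OF v])
qed

lemma Ecoef_zero: "x \<notin> PR_diagrams n \<Longrightarrow> Ecoef iv n x = 0"
  unfolding Ecoef_def using pid_PR[of _ n] by (intro sum.neutral) auto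

lemma snoc_words: "(v @ [x] \<in> bar_words n (Suc m)) = (v \<in> bar_words n m \<and> x \<in> PR_diagrams n)"
  by (auto simp: bar_words_def)

lemma hs_chain:
  assumes c: "c \<in> bar_chains n m"
  shows "hs iv n c \<in> bar_chains n (Suc m)"
  unfolding bar_chains_def
proof (intro CollectI allI impI)
  fix w assume w: "w \<notin> bar_words n (Suc m)"
  show "hs iv n c w = 0"
  proof (cases "w = []")
    case False
    then have "w = butlast w @ [last w]" by simp
    then have "butlast w \<notin> bar_words n m \<or> last w \<notin> PR_diagrams n"
      using w snoc_words by metis
    then show ?thesis using c False by (auto simp: hs_def bar_chains_def Ecoef_zero)
  qed (simp add: hs_def)
qed

lemma words_ne: "v \<in> bar_words n m \<Longrightarrow> 1 \<le> m \<Longrightarrow> v \<noteq> [] \<and> last v \<in> PR_diagrams n \<and> length v = m"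
proof -
  assume v: "v \<in> bar_words n m" and m: "1 \<le> m"
  then have ne: "v \<noteq> []" "length v = m" by (auto simp: bar_words_def)
  then have "last v \<in> set v" by simp
  then show ?thesis using v ne by (auto simp: bar_words_def)
qed

lemma sum_delta_chain:
  assumes c: "c \<in> bar_chains n m"
  shows "(\<Sum>v\<in>bar_words n m. c v * (if w = v then 1 else 0)) = c w"
proof (cases "w \<in> bar_words n m")
  case True
  then show ?thesis by (simp add: finite_words if_distrib[of "\<lambda>x. _ * x"] cong: if_cong)
next
  case False
  then have "c w = 0" using c by (simp add: bar_chains_def)
  moreover have "(\<Sum>v\<in>bar_words n m. c v * (if w = v then 1 else 0)) = 0"
    by (rule sum.neutral) (use False in auto)
  ultimately show ?thesis by simp
qed

lemma sum_delta_chain':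
  assumes c: "c \<in> bar_chains n m"
  shows "(\<Sum>v\<in>bar_words n m. c v * (if v = w then 1 else 0)) = c w"
proof -
  have "(\<Sum>v\<in>bar_words n m. c v * (if v = w then 1 else 0)) = (\<Sum>v\<in>bar_words n m. c v * (if w = v then 1 else 0))"
    by (intro sum.cong refl) auto
  then show ?thesis using sum_delta_chain[OF c] by simp
qed

lemma homotopy:
  fixes eps :: "'k::comm_ring_1"
  assumes ei: "eps * iv = 1" and c: "c \<in> bar_chains n m" and m: "1 \<le> m"
  shows "bar_bdry n eps (Suc m) (hs iv n c) w = hs iv n (bar_bdry n eps m c) w + (-1) ^ Suc m * c w"
proof -
  have "bar_bdry n eps (Suc m) (hs iv n c) w
      = (\<Sum>v\<in>bar_words n m. \<Sum>x\<in>PR_diagrams n. hs iv n c (v @ [x]) * bar_bdry_basis n eps (v @ [x]) w)"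
    unfolding bar_bdry_def by (rule sum_words_Suc)
  also have "\<dots> = (\<Sum>v\<in>bar_words n m. c v * (\<Sum>x\<in>PR_diagrams n. Ecoef iv n x * bar_bdry_basis n eps (v @ [x]) w))"
    by (simp add: hs_def sum_distrib_left mult.assoc)
  also have "\<dots> = (\<Sum>v\<in>bar_words n m. c v * (\<Sum>S\<in>Pow {1..n}. coefS iv n S * bar_bdry_basis n eps (v @ [pid S]) w))"
    by (simp add: sum_E)
  also have "\<dots> = (\<Sum>v\<in>bar_words n m. c v * hs iv n (bar_bdry_basis n eps v) w + (-1) ^ Suc m * (c v * (if w = v then 1 else 0)))"
  proof (rule sum.cong[OF refl])
    fix v assume v: "v \<in> bar_words n m"
    note vv = words_ne[OF v m]
    show "c v * (\<Sum>S\<in>Pow {1..n}. coefS iv n S * bar_bdry_basis n eps (v @ [pid S]) w)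
        = c v * hs iv n (bar_bdry_basis n eps v) w + (-1) ^ Suc m * (c v * (if w = v then 1 else 0))"
      unfolding key[OF ei conjunct1[OF vv] conjunct1[OF conjunct2[OF vv]]] using vv
      by (simp add: algebra_simps)
  qed
  also have "\<dots> = (\<Sum>v\<in>bar_words n m. c v * hs iv n (bar_bdry_basis n eps v) w) + (-1) ^ Suc m * c w"
    by (simp only: sum.distrib sum_distrib_left[symmetric] sum_delta_chain[OF c])
  also have "(\<Sum>v\<in>bar_words n m. c v * hs iv n (bar_bdry_basis n eps v) w) = hs iv n (bar_bdry n eps m c) w"
    by (simp add: hs_def bar_bdry_def sum_distrib_right mult.assoc)
  finally show ?thesis .
qed

lemma words0: "bar_words n 0 = {[]}"
  by (auto simp: bar_words_def)

lemma bdb_single: "bar_bdry_basis n eps [x] w = 0"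
  by (simp add: bar_bdry_basis_def)

lemma iso0: "quotient_iso_ring (bar_chains n 0 :: (diagram list \<Rightarrow> 'k::comm_ring_1) set) {\<lambda>_. 0}"
  unfolding quotient_iso_ring_def
proof (intro exI[of _ "\<lambda>c. c []"] conjI)
  show "(\<lambda>c. c []) ` (bar_chains n 0 :: (diagram list \<Rightarrow> 'k) set) = UNIV"
  proof (rule set_eqI, rule iffI)
    fix a :: 'k
    have "(\<lambda>w. if w = [] then a else 0) \<in> bar_chains n 0" by (auto simp: bar_chains_def words0)
    then show "a \<in> (\<lambda>c. c []) ` bar_chains n 0" by (rule rev_image_eqI) simp
  qed simp
  show "{c \<in> bar_chains n 0. c [] = 0} = {\<lambda>_. 0 :: 'k}"
  proof (rule set_eqI, rule iffI)
    fix c :: "diagram list \<Rightarrow> 'k" assume "c \<in> {c \<in> bar_chains n 0. c [] = 0}"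
    then have "\<forall>w. c w = 0" by (simp add: bar_chains_def words0) metis
    then show "c \<in> {\<lambda>_. 0}" by auto
  qed (auto simp: bar_chains_def words0)
qed auto

lemma bar_bdry_smult: "bar_bdry n eps m (\<lambda>w. a * c w) w = a * bar_bdry n eps m c w"
  by (simp add: bar_bdry_def sum_distrib_left mult.assoc)

lemma hs_zero: "hs iv n (\<lambda>_. 0) = (\<lambda>_. 0)"
  by (auto simp: hs_def)

theorem theorem7p11:
  fixes n :: nat and eps :: "'k::comm_ring_1"
  assumes "n > 0" and "\<exists>e. eps * e = 1"
  shows "quotient_iso_ring (Tor_cycles n eps 0) (Tor_boundaries n eps 0)
       \<and> (\<forall>m>0. quotient_zero (Tor_cycles n eps m) (Tor_boundaries n eps m))
       \<and> quotient_iso_ring (Ext_cocycles n eps 0) (Ext_coboundaries n eps 0)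
       \<and> (\<forall>m>0. quotient_zero (Ext_cocycles n eps m) (Ext_coboundaries n eps m))"
proof -
  obtain iv where ei: "eps * iv = 1" using assms(2) by blast
  have T0: "Tor_cycles n eps 0 = bar_chains n 0"
    by (auto simp: Tor_cycles_def bar_bdry_def words0 bar_bdry_basis_def)
  have B0: "Tor_boundaries n eps 0 = {\<lambda>_. 0}"
  proof -
    have "\<And>c. bar_bdry n eps (Suc 0) c = (\<lambda>_. 0)"
      unfolding bar_bdry_def by (rule ext, rule sum.neutral) (auto simp: bar_words_def length_Suc_conv bdb_single)
    moreover have "(\<lambda>_. 0) \<in> (bar_chains n (Suc 0) :: (diagram list \<Rightarrow> 'k) set)" by (simp add: bar_chains_def)
    ultimately show ?thesis unfolding Tor_boundaries_def by auto
  qed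
  have E0: "Ext_cocycles n eps 0 = bar_chains n 0"
  proof -
    have "\<And>f. bar_cobdry n eps 0 f = (\<lambda>_. 0)"
      unfolding bar_cobdry_def by (rule ext) (auto simp: bar_words_def length_Suc_conv bdb_single)
    then show ?thesis by (auto simp: Ext_cocycles_def)
  qed
  have EB0: "Ext_coboundaries n eps 0 = {\<lambda>_. 0}" by (simp add: Ext_coboundaries_def)
  have tor: "quotient_zero (Tor_cycles n eps m) (Tor_boundaries n eps m)" if m: "m > 0" for m
    unfolding quotient_zero_def
  proof
    fix z assume z: "z \<in> Tor_cycles n eps m"
    then have zc: "z \<in> bar_chains n m" and zb: "bar_bdry n eps m z = (\<lambda>_. 0)"
      by (auto simp: Tor_cycles_def)
    define c where "c = (\<lambda>w. (-1) ^ Suc m * hs iv n z w)"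
    have m1: "1 \<le> m" using m by simp
    have "c \<in> bar_chains n (Suc m)" using hs_chain[OF zc, of iv] by (auto simp: c_def bar_chains_def)
    moreover have "bar_bdry n eps (Suc m) c = z"
    proof
      fix w
      have "bar_bdry n eps (Suc m) c w = (-1) ^ Suc m * ((-1) ^ Suc m * z w)"
        unfolding c_def bar_bdry_smult homotopy[OF ei zc m1] by (simp add: zb hs_zero)
      also have "\<dots> = z w" by (simp flip: mult.assoc power_mult_distrib)
      finally show "bar_bdry n eps (Suc m) c w = z w" .
    qed
    ultimately show "z \<in> Tor_boundaries n eps m" unfolding Tor_boundaries_def by blast
  qed
  have ext: "quotient_zero (Ext_cocycles n eps m) (Ext_coboundaries n eps m)" if m: "m > 0" for m
    unfolding quotient_zero_def
  proof
    fix f assume f: "f \<in> Ext_cocycles n eps m"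
    then have fc: "f \<in> bar_chains n m" and fb: "bar_cobdry n eps m f = (\<lambda>_. 0)"
      by (auto simp: Ext_cocycles_def)
    obtain p where p: "m = Suc p" using m by (cases m) auto
    define g where "g = (\<lambda>w'. (-1) ^ m * (\<Sum>S\<in>Pow {1..n}. coefS iv n S * f (w' @ [pid S])))"
    have gc: "g \<in> bar_chains n p"
      unfolding bar_chains_def
    proof (intro CollectI allI impI)
      fix w' assume "w' \<notin> bar_words n p"
      then have "\<And>S. w' @ [pid S] \<notin> bar_words n m" by (simp add: p snoc_words)
      then show "g w' = 0" using fc by (simp add: g_def bar_chains_def)
    qed
    have "bar_cobdry n eps p g = f"
    proof
      fix v
      show "bar_cobdry n eps p g v = f v"
      proof (cases "v \<in> bar_words n m")
        case False
        then show ?thesis using fc by (simp add: bar_cobdry_def p bar_chains_def)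
      next
        case True
        note vv = words_ne[OF True, unfolded p, simplified]
        have "0 = (\<Sum>S\<in>Pow {1..n}. coefS iv n S * bar_cobdry n eps m f (v @ [pid S]))"
          by (simp add: fb)
        also have "\<dots> = (\<Sum>S\<in>Pow {1..n}. coefS iv n S * (\<Sum>w\<in>bar_words n m. bar_bdry_basis n eps (v @ [pid S]) w * f w))"
        proof (rule sum.cong[OF refl])
          fix S assume "S \<in> Pow {1..n}"
          then have "v @ [pid S] \<in> bar_words n (Suc m)" using True pid_PR[of S n] by (simp add: snoc_words)
          then show "coefS iv n S * bar_cobdry n eps m f (v @ [pid S]) =
                     coefS iv n S * (\<Sum>w\<in>bar_words n m. bar_bdry_basis n eps (v @ [pid S]) w * f w)"
            by (simp add: bar_cobdry_def)
        qed
        also have "\<dots> = (\<Sum>w\<in>bar_words n m. f w * (\<Sum>S\<in>Pow {1..n}. coefS iv n S * bar_bdry_basis n eps (v @ [pid S]) w))"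
          by (simp add: sum_distrib_left sum_distrib_right mult_ac) (rule sum.swap)
        also have "\<dots> = (\<Sum>w\<in>bar_words n m. f w * hs iv n (bar_bdry_basis n eps v) w + (-1) ^ Suc m * (f w * (if w = v then 1 else 0)))"
        proof (rule sum.cong[OF refl])
          fix w assume "w \<in> bar_words n m"
          show "f w * (\<Sum>S\<in>Pow {1..n}. coefS iv n S * bar_bdry_basis n eps (v @ [pid S]) w)
             = f w * hs iv n (bar_bdry_basis n eps v) w + (-1) ^ Suc m * (f w * (if w = v then 1 else 0))"
            unfolding key[OF ei conjunct1[OF vv] conjunct1[OF conjunct2[OF vv]]] using vv
            by (simp add: algebra_simps p)
        qed
        also have "\<dots> = (\<Sum>w\<in>bar_words n m. f w * hs iv n (bar_bdry_basis n eps v) w) + (-1) ^ Suc m * f v"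
          by (simp only: sum.distrib sum_distrib_left[symmetric] sum_delta_chain'[OF fc])
        also have "(\<Sum>w\<in>bar_words n m. f w * hs iv n (bar_bdry_basis n eps v) w)
            = (\<Sum>w'\<in>bar_words n p. \<Sum>x\<in>PR_diagrams n. f (w' @ [x]) * hs iv n (bar_bdry_basis n eps v) (w' @ [x]))"
          unfolding p by (rule sum_words_Suc)
        also have "\<dots> = (\<Sum>w'\<in>bar_words n p. bar_bdry_basis n eps v w' * (\<Sum>x\<in>PR_diagrams n. Ecoef iv n x * f (w' @ [x])))"
          by (simp add: hs_def sum_distrib_left mult_ac)
        also have "\<dots> = (\<Sum>w'\<in>bar_words n p. bar_bdry_basis n eps v w' * ((-1) ^ m * g w'))"
          by (simp add: sum_E g_def)
        also have "\<dots> = (-1) ^ m * bar_cobdry n eps p g v"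
          using True by (simp add: bar_cobdry_def p sum_distrib_left mult_ac)
        finally have eq: "0 = (-1) ^ m * bar_cobdry n eps p g v + (-1) ^ Suc m * f v" .
        have "bar_cobdry n eps p g v = (-1) ^ m * ((-1) ^ m * bar_cobdry n eps p g v)"
          by (simp flip: mult.assoc power_mult_distrib)
        also have "\<dots> = (-1) ^ m * ((-1) ^ m * f v)" using eq by (simp add: algebra_simps)
        also have "\<dots> = f v" by (simp flip: mult.assoc power_mult_distrib)
        finally show ?thesis .
      qed
    qed
    then have "f \<in> bar_cobdry n eps p ` bar_chains n p" using gc by blast
    then show "f \<in> Ext_coboundaries n eps m" by (simp add: Ext_coboundaries_def p)
  qed
  show ?thesis using iso0[of n] tor ext T0 B0 E0 EB0 by simp
qed

end
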